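(* Every 3-colourable finite graph is 101-colourable.
   Context: A finite simple undirected graph is 101-colourable if there is an assignment of a value in $\{0,1\}$ to each vertex such that (i) no two adjacent vertices are both assigned $0$, and (ii) no triangle (3-clique) has all three vertices assigned $1$. *)

theory Defs
  imports Main
begin

definition simple_graph :: "'a set \<Rightarrow> ('a \<Rightarrow> 'a \<Rightarrow> bool) \<Rightarrow> bool" where
  "simple_graph V E \<longleftrightarrow> finite V \<and> (\<forall>x y. E x y \<longrightarrow> E y x) \<and> (\<forall>x. \<not> E x x)
     \<and> (\<forall>x y. E x y \<longrightarrow> x \<in> V \<and> y \<in> V)"

definition colourable :: "nat \<Rightarrow> 'a set \<Rightarrow> ('a \<Rightarrow> 'a \<Rightarrow> bool) \<Rightarrow> bool" where
  "colourable k V E \<longleftrightarrow> (\<exists>c :: 'a \<Rightarrow> nat. (\<forall>v\<in>V. c v < k) \<and>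
      (\<forall>x\<in>V. \<forall>y\<in>V. E x y \<longrightarrow> c x \<noteq> c y))"

text \<open>101-colourable: a 0/1 assignment with no edge both 0 and no triangle all 1.\<close>
definition colourable_101 :: "'a set \<Rightarrow> ('a \<Rightarrow> 'a \<Rightarrow> bool) \<Rightarrow> bool" where
  "colourable_101 V E \<longleftrightarrow> (\<exists>f :: 'a \<Rightarrow> bool.
      (\<forall>x\<in>V. \<forall>y\<in>V. E x y \<longrightarrow> f x \<or> f y) \<and>
      (\<forall>x\<in>V. \<forall>y\<in>V. \<forall>z\<in>V. E x y \<and> E y z \<and> E x z \<longrightarrow> \<not> (f x \<and> f y \<and> f z)))"

end

theory Submission
  imports Defs
begin

theorem mainTheorem3:
  fixes V :: "'a set" and E :: "'a \<Rightarrow> 'a \<Rightarrow> bool"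
  assumes "simple_graph V E"
    and "colourable 3 V E"
  shows "colourable_101 V E"
proof -
  obtain c :: "'a \<Rightarrow> nat" where c: "\<forall>v\<in>V. c v < 3" "\<forall>x\<in>V. \<forall>y\<in>V. E x y \<longrightarrow> c x \<noteq> c y"
    using assms(2) unfolding colourable_def by blast
  show ?thesis unfolding colourable_101_def
  proof (rule exI[of _ "\<lambda>v. c v \<noteq> 0"], intro conjI ballI impI)
    fix x y assume "x \<in> V" "y \<in> V" "E x y"
    then show "c x \<noteq> 0 \<or> c y \<noteq> 0" using c by fastforce
  next
    fix x y z assume xyz: "x \<in> V" "y \<in> V" "z \<in> V" and e: "E x y \<and> E y z \<and> E x z"
    then have "c x \<noteq> c y" "c y \<noteq> c z" "c x \<noteq> c z" "c x < 3" "c y < 3" "c z < 3"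
      using c by auto
    then show "\<not> (c x \<noteq> 0 \<and> c y \<noteq> 0 \<and> c z \<noteq> 0)" by linarith
  qed
qed

end
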